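(* Let $N\ge 1$ and $-\infty<a_i\le b_i<\infty$ with $r_i=(b_i-a_i)/2>0$ for all $i$; set $m_i=(a_i+b_i)/2$, $\Theta=\prod_{i=1}^N[a_i,b_i]$, $T(y)=\sum_{i=1}^N y_i$. Fix a sampling design $p$ with inclusion probabilities $\pi_i=\mathbb P_p(i\in S)>0$ for every $i$. Then the estimator $\widehat T(y_S)=\sum_{i=1}^N m_i+\sum_{i\in S}\frac{y_i-m_i}{\pi_i}$ is admissible in the class of unbiased estimators under squared-error loss: there is no unbiased estimator $\delta$ with $R(\delta,p;y)\le R(\widehat T,p;y)$ for all $y\in\Theta$ and strict inequality for some $y\in\Theta$.
   Context: A sampling design is a probability distribution $p$ on the subsets $s\subseteq\{1,\dots,N\}$; $S$ denotes the random sample drawn from $p$, $\mathbb P_p$ and $\mathbb E_p$ denote probability and expectation with respect to $p$. An estimator $\delta$ is a collection of measurable functions $\delta_s:\Theta_s\to\mathbb R$, one for each subset $s$, where $\Theta_s=\prod_{i\in s}[a_i,b_i]$; for $y\in\Theta$ write $y_s=(y_i)_{i\in s}$. The estimator is unbiased if $\mathbb E_p[\delta_S(y_S)]=T(y)$ for all $y\in\Theta$. The risk is $R(\delta,p;y)=\mathbb E_p[(\delta_S(y_S)-T(y))^2]$. *)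

theory Defs
  imports "HOL-Probability.Probability"
begin

text \<open>A data vector is y :: nat => real; only y 1..y N matter.
  An estimator is delta :: nat set => (nat => real) => real; on sample s it is applied to
  y_s, represented as restrict y s (a function on s, undefined elsewhere).\<close>

definition sampling_design :: "nat \<Rightarrow> (nat set \<Rightarrow> real) \<Rightarrow> bool" where
  "sampling_design N p \<longleftrightarrow> (\<forall>s \<in> Pow {1..N}. p s \<ge> 0) \<and> (\<Sum>s \<in> Pow {1..N}. p s) = 1"

definition incl_prob :: "nat \<Rightarrow> (nat set \<Rightarrow> real) \<Rightarrow> nat \<Rightarrow> real" where
  "incl_prob N p i = (\<Sum>s \<in> {s \<in> Pow {1..N}. i \<in> s}. p s)"

definition in_Theta :: "nat \<Rightarrow> (nat \<Rightarrow> real) \<Rightarrow> (nat \<Rightarrow> real) \<Rightarrow> (nat \<Rightarrow> real) \<Rightarrow> bool" where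
  "in_Theta N a b y \<longleftrightarrow> (\<forall>i \<in> {1..N}. a i \<le> y i \<and> y i \<le> b i)"

definition total :: "nat \<Rightarrow> (nat \<Rightarrow> real) \<Rightarrow> real" where
  "total N y = (\<Sum>i = 1..N. y i)"

definition estimator :: "nat \<Rightarrow> (nat \<Rightarrow> real) \<Rightarrow> (nat \<Rightarrow> real) \<Rightarrow> (nat set \<Rightarrow> (nat \<Rightarrow> real) \<Rightarrow> real) \<Rightarrow> bool" where
  "estimator N a b \<delta> \<longleftrightarrow>
     (\<forall>s \<in> Pow {1..N}. \<delta> s \<in> borel_measurable (PiM s (\<lambda>i. restrict_space borel {a i..b i})))"

definition expect_est :: "nat \<Rightarrow> (nat set \<Rightarrow> real) \<Rightarrow> (nat set \<Rightarrow> (nat \<Rightarrow> real) \<Rightarrow> real) \<Rightarrow> (nat \<Rightarrow> real) \<Rightarrow> real" where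
  "expect_est N p \<delta> y = (\<Sum>s \<in> Pow {1..N}. p s * \<delta> s (restrict y s))"

definition unbiased :: "nat \<Rightarrow> (nat \<Rightarrow> real) \<Rightarrow> (nat \<Rightarrow> real) \<Rightarrow> (nat set \<Rightarrow> real) \<Rightarrow> (nat set \<Rightarrow> (nat \<Rightarrow> real) \<Rightarrow> real) \<Rightarrow> bool" where
  "unbiased N a b p \<delta> \<longleftrightarrow> (\<forall>y. in_Theta N a b y \<longrightarrow> expect_est N p \<delta> y = total N y)"

definition risk :: "nat \<Rightarrow> (nat set \<Rightarrow> (nat \<Rightarrow> real) \<Rightarrow> real) \<Rightarrow> (nat set \<Rightarrow> real) \<Rightarrow> (nat \<Rightarrow> real) \<Rightarrow> real" where
  "risk N \<delta> p y = (\<Sum>s \<in> Pow {1..N}. p s * (\<delta> s (restrict y s) - total N y)\<^sup>2)"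

definition T_hat :: "nat \<Rightarrow> (nat \<Rightarrow> real) \<Rightarrow> (nat \<Rightarrow> real) \<Rightarrow> (nat set \<Rightarrow> real) \<Rightarrow> nat set \<Rightarrow> (nat \<Rightarrow> real) \<Rightarrow> real" where
  "T_hat N a b p s z =
     (\<Sum>i = 1..N. (a i + b i) / 2) + (\<Sum>i \<in> s. (z i - (a i + b i) / 2) / incl_prob N p i)"

end

theory Submission
  imports Defs
begin

lemma That_restrict:
  assumes "s \<subseteq> {1..N}"
  shows "T_hat N a b p s (restrict y s) =
     (\<Sum>i = 1..N. (a i + b i) / 2) + (\<Sum>i \<in> s. (y i - (a i + b i) / 2) / incl_prob N p i)"
  unfolding T_hat_def by (auto intro!: sum.cong)

lemma That_unbiased:
  assumes sd: "sampling_design N p" and pi: "\<forall>i \<in> {1..N}. incl_prob N p i > 0"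
  shows "expect_est N p (T_hat N a b p) y = total N y"
proof -
  let ?P = "Pow {1..N}"
  let ?m = "\<lambda>i. (a i + b i) / 2"
  let ?M = "\<Sum>i = 1..N. ?m i"
  let ?f = "\<lambda>i. (y i - ?m i) / incl_prob N p i"
  have "expect_est N p (T_hat N a b p) y = (\<Sum>s\<in>?P. p s * ?M + (\<Sum>i\<in>s. p s * ?f i))"
    unfolding expect_est_def
    by (rule sum.cong) (auto simp: That_restrict distrib_left sum_distrib_left)
  also have "\<dots> = ?M + (\<Sum>s\<in>?P. \<Sum>i\<in>{i\<in>{1..N}. i \<in> s}. p s * ?f i)"
  proof -
    have "(\<Sum>s\<in>?P. p s * ?M) = ?M" using sd unfolding sampling_design_def
      by (simp add: sum_distrib_right[symmetric])
    moreover have "(\<Sum>s\<in>?P. \<Sum>i\<in>s. p s * ?f i) = (\<Sum>s\<in>?P. \<Sum>i\<in>{i\<in>{1..N}. i \<in> s}. p s * ?f i)"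
      by (rule sum.cong) (auto intro!: sum.cong)
    ultimately show ?thesis by (simp add: sum.distrib)
  qed
  also have "\<dots> = ?M + (\<Sum>i\<in>{1..N}. \<Sum>s\<in>{s\<in>?P. i \<in> s}. p s * ?f i)"
    by (subst sum.swap_restrict) auto
  also have "\<dots> = ?M + (\<Sum>i\<in>{1..N}. incl_prob N p i * ?f i)"
  proof -
    have "(\<Sum>s\<in>{s\<in>?P. i \<in> s}. p s * ?f i) = incl_prob N p i * ?f i" for i
      unfolding incl_prob_def by (rule sum_distrib_right[symmetric])
    then show ?thesis by simp
  qed
  also have "\<dots> = ?M + (\<Sum>i\<in>{1..N}. y i - ?m i)"
    using pi by (auto intro!: sum.cong)
  also have "\<dots> = total N y" unfolding total_def by (simp add: sum_subtractf)
  finally show ?thesis .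
qed

lemma key:
  assumes sd: "sampling_design N p" and pi: "\<forall>i \<in> {1..N}. incl_prob N p i > 0"
    and ab: "\<forall>i \<in> {1..N}. a i \<le> b i"
    and unb: "unbiased N a b p \<delta>"
    and le: "\<forall>y. in_Theta N a b y \<longrightarrow> risk N \<delta> p y \<le> risk N (T_hat N a b p) p y"
  shows "\<forall>y. in_Theta N a b y \<longrightarrow> card {i\<in>{1..N}. y i \<noteq> (a i + b i) / 2} = n \<longrightarrow>
           (\<forall>s\<in>Pow {1..N}. p s > 0 \<longrightarrow> \<delta> s (restrict y s) = T_hat N a b p s (restrict y s))"
proof (induction n rule: less_induct)
  case (less n)
  show ?case
  proof (intro allI impI)
    fix y assume th: "in_Theta N a b y" and cd: "card {i\<in>{1..N}. y i \<noteq> (a i + b i) / 2} = n"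
    let ?P = "Pow {1..N}"
    let ?m = "\<lambda>i. (a i + b i) / 2"
    let ?M = "\<Sum>i = 1..N. ?m i"
    let ?f = "\<lambda>i. (y i - ?m i) / incl_prob N p i"
    define A where "A = {i\<in>{1..N}. y i \<noteq> ?m i}"
    define h where "h s = \<delta> s (restrict y s) - T_hat N a b p s (restrict y s)" for s
    define D where "D s = T_hat N a b p s (restrict y s) - total N y" for s
    define c where "c = (\<Sum>i\<in>A. ?f i) - (\<Sum>i\<in>A. y i - ?m i)"
    have p0: "\<forall>s\<in>?P. p s \<ge> 0" using sd unfolding sampling_design_def by blast
    have h1: "h s = 0" if s: "s \<in> ?P" "p s > 0" "\<not> A \<subseteq> s" for s
    proof -
      define y' where "y' i = (if i \<in> s then y i else ?m i)" for i
      have th': "in_Theta N a b y'" using th ab unfolding in_Theta_def y'_def by auto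
      have "{i\<in>{1..N}. y' i \<noteq> ?m i} = A \<inter> s" unfolding A_def y'_def by auto
      also have "card (A \<inter> s) < card A"
        using s by (intro psubset_card_mono) (auto simp: A_def)
      finally have "card {i\<in>{1..N}. y' i \<noteq> ?m i} < n" using cd A_def by simp
      with less th' s have "\<delta> s (restrict y' s) = T_hat N a b p s (restrict y' s)" by blast
      moreover have "restrict y' s = restrict y s" unfolding y'_def restrict_def by auto
      ultimately show ?thesis unfolding h_def by simp
    qed
    have h2: "D s = c" if s: "s \<in> ?P" "A \<subseteq> s" for s
    proof -
      have fA: "finite A" unfolding A_def by simp
      have "(\<Sum>i\<in>s. ?f i) = (\<Sum>i\<in>A. ?f i)"
        using s by (intro sum.mono_neutral_right) (auto simp: A_def intro: finite_subset)
      moreover have "total N y = ?M + (\<Sum>i\<in>{1..N}. y i - ?m i)"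
        unfolding total_def by (simp add: sum_subtractf)
      moreover have "(\<Sum>i\<in>{1..N}. y i - ?m i) = (\<Sum>i\<in>A. y i - ?m i)"
        by (intro sum.mono_neutral_right) (auto simp: A_def)
      ultimately show ?thesis unfolding D_def c_def using s by (simp add: That_restrict)
    qed
    have h3: "(\<Sum>s\<in>?P. p s * h s) = 0"
    proof -
      have "(\<Sum>s\<in>?P. p s * h s) = expect_est N p \<delta> y - expect_est N p (T_hat N a b p) y"
        unfolding expect_est_def h_def right_diff_distrib sum_subtractf by (rule refl)
      also have "\<dots> = 0"
      proof -
        have "expect_est N p \<delta> y = total N y" using unb th unfolding unbiased_def by blast
        moreover have "expect_est N p (T_hat N a b p) y = total N y" by (rule That_unbiased[OF sd pi])
        ultimately show ?thesis by simp
      qed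
      finally show ?thesis .
    qed
    have pt: "p s * (h s + D s)^2 = p s * (D s)^2 + 2 * c * (p s * h s) + p s * (h s)^2"
      if s: "s \<in> ?P" for s
    proof (cases "p s = 0")
      case True then show ?thesis by simp
    next
      case False
      have "p s \<ge> 0" using p0 s by blast
      with False have "p s > 0" by linarith
      show ?thesis
      proof (cases "A \<subseteq> s")
        case True
        then have "D s = c" using h2 s by blast
        then show ?thesis by (simp add: power2_eq_square algebra_simps)
      next
        case False
        then have "h s = 0" using h1 s \<open>p s > 0\<close> by blast
        then show ?thesis by simp
      qed
    qed
    have "risk N \<delta> p y = (\<Sum>s\<in>?P. p s * (h s + D s)^2)"
      unfolding risk_def h_def D_def by simp
    also have "\<dots> = (\<Sum>s\<in>?P. p s * (D s)^2 + 2 * c * (p s * h s) + p s * (h s)^2)"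
      using pt by (rule sum.cong[OF refl])
    also have "\<dots> = risk N (T_hat N a b p) p y + 2 * c * (\<Sum>s\<in>?P. p s * h s) + (\<Sum>s\<in>?P. p s * (h s)^2)"
      unfolding risk_def D_def by (simp add: sum.distrib sum_distrib_left)
    finally have "risk N \<delta> p y = risk N (T_hat N a b p) p y + (\<Sum>s\<in>?P. p s * (h s)^2)"
      using h3 by simp
    with le th have "(\<Sum>s\<in>?P. p s * (h s)^2) \<le> 0" by fastforce
    moreover have nn: "\<forall>s\<in>?P. p s * (h s)^2 \<ge> 0" using p0 by simp
    ultimately have "(\<Sum>s\<in>?P. p s * (h s)^2) = 0" by (meson antisym sum_nonneg)
    then have z: "\<forall>s\<in>?P. p s * (h s)^2 = 0" using nn sum_nonneg_eq_0_iff[of "Pow {1..N}" "\<lambda>s. p s * (h s)^2"] by (simp del: mult_eq_0_iff)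
    show "\<forall>s\<in>?P. p s > 0 \<longrightarrow> \<delta> s (restrict y s) = T_hat N a b p s (restrict y s)"
    proof (intro ballI impI)
      fix s assume "s \<in> ?P" "p s > 0"
      then have "p s * (h s)^2 = 0" using z by blast
      with \<open>p s > 0\<close> have "h s = 0" by simp
      then show "\<delta> s (restrict y s) = T_hat N a b p s (restrict y s)" unfolding h_def by simp
    qed
  qed
qed

theorem proposition1:
  fixes N :: nat and a b :: "nat \<Rightarrow> real" and p :: "nat set \<Rightarrow> real"
  assumes "N \<ge> 1"
    and "\<forall>i \<in> {1..N}. (b i - a i) / 2 > 0"
    and "sampling_design N p"
    and "\<forall>i \<in> {1..N}. incl_prob N p i > 0"
  shows "\<not> (\<exists>\<delta>. estimator N a b \<delta> \<and> unbiased N a b p \<delta> \<and>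
            (\<forall>y. in_Theta N a b y \<longrightarrow> risk N \<delta> p y \<le> risk N (T_hat N a b p) p y) \<and>
            (\<exists>y. in_Theta N a b y \<and> risk N \<delta> p y < risk N (T_hat N a b p) p y))"
proof
  assume "\<exists>\<delta>. estimator N a b \<delta> \<and> unbiased N a b p \<delta> \<and>
            (\<forall>y. in_Theta N a b y \<longrightarrow> risk N \<delta> p y \<le> risk N (T_hat N a b p) p y) \<and>
            (\<exists>y. in_Theta N a b y \<and> risk N \<delta> p y < risk N (T_hat N a b p) p y)"
  then obtain \<delta> y where unb: "unbiased N a b p \<delta>"
    and le: "\<forall>y. in_Theta N a b y \<longrightarrow> risk N \<delta> p y \<le> risk N (T_hat N a b p) p y"
    and th: "in_Theta N a b y" and lt: "risk N \<delta> p y < risk N (T_hat N a b p) p y" by blast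
  have ab: "\<forall>i \<in> {1..N}. a i \<le> b i" using assms(2) by force
  have "\<forall>s\<in>Pow {1..N}. p s > 0 \<longrightarrow> \<delta> s (restrict y s) = T_hat N a b p s (restrict y s)"
    using key[OF assms(3) assms(4) ab unb le] th by blast
  then have eq: "\<And>s. s \<in> Pow {1..N} \<Longrightarrow> p s * (\<delta> s (restrict y s) - total N y)\<^sup>2
      = p s * (T_hat N a b p s (restrict y s) - total N y)\<^sup>2"
  proof -
    fix s assume s: "s \<in> Pow {1..N}"
    show "p s * (\<delta> s (restrict y s) - total N y)\<^sup>2
      = p s * (T_hat N a b p s (restrict y s) - total N y)\<^sup>2"
    proof (cases "p s > 0")
      case True
      then have "\<delta> s (restrict y s) = T_hat N a b p s (restrict y s)" using s \<open>\<forall>s\<in>Pow {1..N}. _\<close> by blast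
      then show ?thesis by simp
    next
      case False
      have "p s \<ge> 0" using assms(3) s unfolding sampling_design_def by blast
      with False have "p s = 0" by linarith
      then show ?thesis by simp
    qed
  qed
  have "risk N \<delta> p y = risk N (T_hat N a b p) p y"
    unfolding risk_def using eq by (rule sum.cong[OF refl])
  with lt show False by simp
qed

end
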